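(* Let $J=p\ge1$, $\sigma_\varepsilon^2>0$, $I>0$, let $\mathbf{\Sigma}_\gamma$ be a nonnegative definite symmetric $J\times J$ matrix and $\mathbf{A}_{\bm\beta}$ a nonsingular $J\times J$ matrix. For an approximate design $\xi=(I_1,\dots,I_J)$ (reals $I_j\ge0$, $\sum_jI_j=I$) put $\mathbf{M}_0(\xi)=\mathrm{diag}(I_1,\dots,I_J)$ and $\mathbf{M}_{\bm\beta}(\xi)=\mathbf{A}_{\bm\beta}^{\mathrm T}\mathbf{M}_0(\xi)^{1/2}\big(\sigma_\varepsilon^2\mathbf{I}_J+\mathbf{M}_0(\xi)^{1/2}\mathbf{\Sigma}_\gamma\mathbf{M}_0(\xi)^{1/2}\big)^{-1}\mathbf{M}_0(\xi)^{1/2}\mathbf{A}_{\bm\beta}$ with $\mathbf{M}_0(\xi)^{1/2}=\mathrm{diag}(\sqrt{I_1},\dots,\sqrt{I_J})$. Let $\xi^*=(I_1^*,\dots,I_J^* )$ be a design with all $I_j^*>0$, and let $\psi_j$ denote the $j$th diagonal entry of $$\mathbf{M}_0(\xi^* )^{-1}\big(\sigma_\varepsilon^2\mathbf{M}_0(\xi^* )^{-1}+\mathbf{\Sigma}_\gamma\big)^{-1}\mathbf{M}_0(\xi^* )^{-1}.$$ Then $\xi^*$ is $D$-optimal if and only if $$I\psi_j=\mathrm{trace}\Big(\big(\sigma_\varepsilon^2\mathbf{M}_0(\xi^* )^{-1}+\mathbf{\Sigma}_\gamma\big)^{-1}\mathbf{M}_0(\xi^* )^{-1}\Big)\quad\text{for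 all } j=1,\dots,J.$$
   Context: $\mathbf{A}_{\bm\beta}$ is the Jacobian of the mean response curve at a fixed parameter $\bm\beta$, with as many parameters as time points. $\bm\beta$ is estimable under $\xi$ if $\mathbf{A}_{\bm\beta}$ has full column rank and its columns lie in the column space of $\mathbf{M}_0(\xi)$ (for $J=p$ this forces all $I_j>0$). A design $\xi^*$ is $D$-optimal if $\log\det\mathbf{M}_{\bm\beta}(\xi^* )\ge\log\det\mathbf{M}_{\bm\beta}(\xi)$ for all approximate designs $\xi$ with total $I$ under which $\bm\beta$ is estimable. *)

theory Defs
  imports "HOL-Analysis.Analysis"
begin

definition diag_mat :: "real^'n \<Rightarrow> real^'n^'n" where
  "diag_mat d = (\<chi> i j. if i = j then d $ i else 0)"

definition is_design :: "real \<Rightarrow> real^'n \<Rightarrow> bool" where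
  "is_design I xi \<longleftrightarrow> (\<forall>j. xi $ j \<ge> 0) \<and> (\<Sum>j\<in>UNIV. xi $ j) = I"

definition M0 :: "real^'n \<Rightarrow> real^'n^'n" where
  "M0 xi = diag_mat xi"

definition M0_sqrt :: "real^'n \<Rightarrow> real^'n^'n" where
  "M0_sqrt xi = diag_mat (\<chi> j. sqrt (xi $ j))"

definition Mbeta :: "real \<Rightarrow> real^'n^'n \<Rightarrow> real^'n^'n \<Rightarrow> real^'n \<Rightarrow> real^'n^'n" where
  "Mbeta s2 Sg A xi =
     transpose A ** M0_sqrt xi **
     matrix_inv (s2 *\<^sub>R mat 1 + M0_sqrt xi ** Sg ** M0_sqrt xi) **
     M0_sqrt xi ** A"

definition estimable :: "real^'n^'n \<Rightarrow> real^'n \<Rightarrow> bool" where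
  "estimable A xi \<longleftrightarrow> rank A = CARD('n) \<and> columns A \<subseteq> span (columns (M0 xi))"

definition D_optimal :: "real \<Rightarrow> real \<Rightarrow> real^'n^'n \<Rightarrow> real^'n^'n \<Rightarrow> real^'n \<Rightarrow> bool" where
  "D_optimal I s2 Sg A xs \<longleftrightarrow>
     is_design I xs \<and> estimable A xs \<and>
     (\<forall>xi. is_design I xi \<and> estimable A xi \<longrightarrow>
        ln (det (Mbeta s2 Sg A xi)) \<le> ln (det (Mbeta s2 Sg A xs)))"

end

theory Submission
  imports Defs
begin

definition Bm :: "real \<Rightarrow> real^'n^'n \<Rightarrow> real^'n \<Rightarrow> real^'n^'n" where
  "Bm s2 Sg w = (\<chi> i j. if i = j then s2 / w$i else 0) + Sg"

definition cf :: "real^'n^'n \<Rightarrow> 'n set \<Rightarrow> real" where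
  "cf Sg F = det (\<chi> i. if i \<in> F then axis i 1 else Sg$i)"

definition tm :: "real \<Rightarrow> real^'n^'n \<Rightarrow> real^'n \<Rightarrow> 'n set \<Rightarrow> real" where
  "tm s2 Sg w F = (\<Prod>i\<in>F. s2 / w$i) * cf Sg F"

lemma det_expand_T:
  fixes d :: "'n::finite \<Rightarrow> real" and r c :: "'n \<Rightarrow> real^'n"
  assumes "finite T"
  shows "det (\<chi> i. if i \<in> T then d i *s axis i 1 + r i else c i) =
    (\<Sum>F\<in>Pow T. (\<Prod>i\<in>F. d i) * det (\<chi> i. if i \<in> T then (if i \<in> F then axis i 1 else r i) else c i))"
  using assms
proof (induction T arbitrary: c rule: finite_induct)
  case empty
  then show ?case by simp
next
  case (insert z T)
  let ?c1 = "\<lambda>i. if i = z then axis z 1 else c i"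
  let ?c2 = "\<lambda>i. if i = z then r z else c i"
  let ?M = "\<lambda>i. if i \<in> T then d i *s axis i 1 + r i else c i"
  have "(\<chi> i. if i \<in> insert z T then d i *s axis i 1 + r i else c i)
      = (\<chi> i. if i = z then d z *s axis z 1 + r z else ?M i)"
    by (rule Cart_lambda_cong) auto
  then have "det (\<chi> i. if i \<in> insert z T then d i *s axis i 1 + r i else c i)
     = det (\<chi> i. if i = z then d z *s axis z 1 else ?M i) + det (\<chi> i. if i = z then r z else ?M i)"
    using det_row_add[of z "\<lambda>_. d z *s axis z 1" "\<lambda>_. r z" ?M] by simp
  also have "\<dots> = d z * det (\<chi> i. if i = z then axis z 1 else ?M i) + det (\<chi> i. if i = z then r z else ?M i)"
    using det_row_mul[of z "d z" "\<lambda>_. axis z 1" ?M] by simp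
  also have "(\<chi> i. if i = z then axis z 1 else ?M i) = (\<chi> i. if i \<in> T then d i *s axis i 1 + r i else ?c1 i)"
    using insert.hyps by (intro Cart_lambda_cong) auto
  also have "(\<chi> i. if i = z then r z else ?M i) = (\<chi> i. if i \<in> T then d i *s axis i 1 + r i else ?c2 i)"
    using insert.hyps by (intro Cart_lambda_cong) auto
  finally have L: "det (\<chi> i. if i \<in> insert z T then d i *s axis i 1 + r i else c i) =
     d z * (\<Sum>F\<in>Pow T. (\<Prod>i\<in>F. d i) * det (\<chi> i. if i \<in> T then (if i \<in> F then axis i 1 else r i) else ?c1 i))
     + (\<Sum>F\<in>Pow T. (\<Prod>i\<in>F. d i) * det (\<chi> i. if i \<in> T then (if i \<in> F then axis i 1 else r i) else ?c2 i))"
    by (simp only: insert.IH)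
  let ?g = "\<lambda>F. (\<Prod>i\<in>F. d i) * det (\<chi> i. if i \<in> insert z T then (if i \<in> F then axis i 1 else r i) else c i)"
  have "(\<Sum>F\<in>Pow (insert z T). ?g F) = (\<Sum>F\<in>Pow T. ?g F) + (\<Sum>F\<in>insert z ` Pow T. ?g F)"
    unfolding Pow_insert using insert.hyps
    by (intro sum.union_disjoint) auto
  also have "(\<Sum>F\<in>insert z ` Pow T. ?g F) = (\<Sum>F\<in>Pow T. ?g (insert z F))"
    using insert.hyps by (intro sum.reindex[unfolded comp_def]) (auto simp: inj_on_def)
  also have "(\<Sum>F\<in>Pow T. ?g (insert z F)) =
     d z * (\<Sum>F\<in>Pow T. (\<Prod>i\<in>F. d i) * det (\<chi> i. if i \<in> T then (if i \<in> F then axis i 1 else r i) else ?c1 i))"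
    unfolding sum_distrib_left
  proof (rule sum.cong)
    fix F assume F: "F \<in> Pow T"
    then have "finite F" using insert.hyps finite_subset by blast
    moreover have "z \<notin> F" using F insert.hyps by auto
    moreover have "(\<chi> i. if i \<in> insert z T then (if i \<in> insert z F then axis i 1 else r i) else c i)
        = (\<chi> i. if i \<in> T then (if i \<in> F then axis i 1 else r i) else ?c1 i)"
      using insert.hyps by (intro Cart_lambda_cong) auto
    ultimately show "?g (insert z F) = d z * ((\<Prod>i\<in>F. d i) * det (\<chi> i. if i \<in> T then (if i \<in> F then axis i 1 else r i) else ?c1 i))"
      by simp
  qed simp
  also have "(\<Sum>F\<in>Pow T. ?g F) = (\<Sum>F\<in>Pow T. (\<Prod>i\<in>F. d i) * det (\<chi> i. if i \<in> T then (if i \<in> F then axis i 1 else r i) else ?c2 i))"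
  proof (rule sum.cong)
    fix F assume F: "F \<in> Pow T"
    then have "z \<notin> F" using insert.hyps by auto
    then have "(\<chi> i. if i \<in> insert z T then (if i \<in> F then axis i 1 else r i) else c i)
        = (\<chi> i. if i \<in> T then (if i \<in> F then axis i 1 else r i) else ?c2 i)"
      using insert.hyps by (intro Cart_lambda_cong) auto
    then show "?g F = (\<Prod>i\<in>F. d i) * det (\<chi> i. if i \<in> T then (if i \<in> F then axis i 1 else r i) else ?c2 i)"
      by simp
  qed simp
  finally show ?case using L by simp
qed

lemma det_expand:
  fixes d :: "'n::finite \<Rightarrow> real" and r :: "'n \<Rightarrow> real^'n"
  shows "det (\<chi> i. d i *s axis i 1 + r i) =
    (\<Sum>F\<in>UNIV. (\<Prod>i\<in>F. d i) * det (\<chi> i. if i \<in> F then axis i 1 else r i))"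
  using det_expand_T[of "UNIV :: 'n set" d r r] by simp

lemma Bm_rows: "Bm s2 Sg w = (\<chi> i. (s2 / w$i) *s axis i 1 + Sg$i)"
  by (simp add: Bm_def vec_eq_iff axis_def)

lemma det_Bm: "det (Bm s2 Sg w) = (\<Sum>F\<in>UNIV. tm s2 Sg w F)"
  unfolding Bm_rows det_expand tm_def cf_def ..

lemma cof_Bm:
  assumes "w$j \<noteq> 0"
  shows "s2 / w$j * det (\<chi> i. if i = j then axis j 1 else Bm s2 Sg w $ i) = (\<Sum>F | j \<in> F. tm s2 Sg w F)"
proof -
  let ?d = "\<lambda>i. if i = j then 1 else s2 / w$i"
  let ?r = "\<lambda>i. if i = j then 0 else Sg$i"
  let ?h = "\<lambda>F. (\<Prod>i\<in>F. ?d i) * det (\<chi> i. if i \<in> F then axis i 1 else ?r i)"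
  have "(\<chi> i. if i = j then axis j 1 else Bm s2 Sg w $ i) = (\<chi> i. ?d i *s axis i 1 + ?r i)"
    by (simp add: Bm_rows vec_eq_iff)
  then have "det (\<chi> i. if i = j then axis j 1 else Bm s2 Sg w $ i) = (\<Sum>F\<in>UNIV. ?h F)"
    by (simp add: det_expand)
  also have "\<dots> = (\<Sum>F | j \<in> F. ?h F)"
  proof (rule sum.mono_neutral_right)
    show "\<forall>F\<in>UNIV - {F. j \<in> F}. ?h F = 0"
    proof
      fix F assume "F \<in> UNIV - {F. j \<in> F}"
      then have "row j (\<chi> i. if i \<in> F then axis i 1 else ?r i) = 0" by (simp add: row_def vec_eq_iff)
      then have "det (\<chi> i. if i \<in> F then axis i 1 else ?r i) = 0" by (rule det_zero_row(1))
      then show "?h F = 0" by simp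
    qed
  qed auto
  finally have 1: "det (\<chi> i. if i = j then axis j 1 else Bm s2 Sg w $ i) = (\<Sum>F | j \<in> F. ?h F)" .
  have 2: "s2 / w$j * ?h F = tm s2 Sg w F" if "j \<in> F" for F
  proof -
    have "(\<chi> i. if i \<in> F then axis i 1 else ?r i) = (\<chi> i. if i \<in> F then axis i 1 else Sg$i)"
      using that by (intro Cart_lambda_cong) auto
    moreover have "(\<Prod>i\<in>F. s2 / w$i) = s2 / w$j * (\<Prod>i\<in>F. ?d i)"
    proof -
      have fF: "finite F" by simp
      have "(\<Prod>i\<in>F. s2 / w$i) = s2 / w$j * (\<Prod>i\<in>F-{j}. s2 / w$i)"
        using prod.remove[OF fF that, of "\<lambda>i. s2 / w$i"] by simp
      moreover have "(\<Prod>i\<in>F. ?d i) = ?d j * (\<Prod>i\<in>F-{j}. ?d i)"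
        by (rule prod.remove[OF fF that])
      moreover have "(\<Prod>i\<in>F-{j}. ?d i) = (\<Prod>i\<in>F-{j}. s2 / w$i)"
        by (rule prod.cong) auto
      ultimately show ?thesis by simp
    qed
    ultimately show ?thesis unfolding tm_def cf_def by simp
  qed
  show ?thesis unfolding 1 sum_distrib_left by (rule sum.cong) (use 2 in blast)+
qed

lemma continuous_on_if_const [continuous_intros]:
  "continuous_on S f \<Longrightarrow> continuous_on S g \<Longrightarrow> continuous_on S (\<lambda>x. if P then f x else g x)"
  by (cases P) auto

lemma sum_delta_mult: fixes i :: "'n::finite" shows "(\<Sum>j\<in>UNIV. (if i = j then 1 else 0) * (g j::real)) = g i"
proof -
  have "(\<Sum>j\<in>UNIV. (if i = j then 1 else 0) * g j) = (\<Sum>j\<in>UNIV. if i = j then g j else 0)"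
    by (rule sum.cong) auto
  also have "\<dots> = g i" using sum.delta'[OF finite, of i g] by simp
  finally show ?thesis .
qed

lemma ker_det_nz:
  fixes N :: "real^'n^'n"
  assumes "\<And>v. N *v v = 0 \<Longrightarrow> v = 0"
  shows "det N \<noteq> 0"
proof -
  obtain B where "B ** N = mat 1" using matrix_left_invertible_ker[of N] assms by blast
  then have "N ** B = mat 1" using matrix_left_right_inverse by blast
  with \<open>B ** N = mat 1\<close> have "invertible N" unfolding invertible_def by blast
  then show ?thesis by (simp add: invertible_det_nz)
qed

lemma pd_minor_nz:
  fixes M :: "real^'n^'n"
  assumes pd: "\<And>x. x \<noteq> 0 \<Longrightarrow> 0 < x \<bullet> (M *v x)"
  shows "det (\<chi> i j. if i \<in> F then (if i = j then 1 else 0) else M$i$j) \<noteq> 0"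
proof (rule ker_det_nz)
  fix v :: "real^'n"
  assume N: "(\<chi> i j. if i \<in> F then (if i = j then 1 else 0) else M$i$j) *v v = 0"
  have comp: "(if i \<in> F then v$i else (M *v v)$i) = 0" for i
  proof -
    have "((\<chi> i j. if i \<in> F then (if i = j then 1 else 0) else M$i$j) *v v) $ i = 0"
      using N by simp
    then show ?thesis
      by (cases "i \<in> F") (simp_all add: matrix_vector_mult_def sum_delta_mult)
  qed
  have "v \<bullet> (M *v v) = (\<Sum>i\<in>UNIV. v$i * (M *v v)$i)"
    by (simp add: inner_vec_def)
  also have "\<dots> = 0"
  proof (rule sum.neutral, rule ballI)
    fix i show "v$i * (M *v v)$i = 0" using comp[of i] by (cases "i \<in> F") auto
  qed
  finally show "v = 0" using pd by (metis less_irrefl)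
qed

lemma cf_nonneg:
  fixes Sg :: "real^'n^'n"
  assumes psd: "\<forall>x. 0 \<le> x \<bullet> (Sg *v x)"
  shows "0 \<le> cf Sg F"
proof (rule ccontr)
  assume neg: "\<not> 0 \<le> cf Sg F"
  define N where "N s = (\<chi> i j. if i \<in> F then (if i = j then 1 else 0)
      else (1 - s) * (if i = j then 1 else 0) + s * Sg$i$j)" for s :: real
  define f where "f s = det (N s)" for s
  have f_eq: "f = (\<lambda>s. \<Sum>p\<in>{p. p permutes (UNIV :: 'n set)}. of_int (sign p) *
      (\<Prod>i\<in>UNIV. (if i \<in> F then (if i = p i then 1 else 0) else (1 - s) * (if i = p i then 1 else 0) + s * Sg$i$(p i))))"
    by (rule ext) (simp add: f_def N_def det_def)
  have cont: "continuous_on {0..1} f"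
    unfolding f_eq by (intro continuous_intros)
  have f0: "f 0 = 1"
  proof -
    have "N 0 = mat 1" by (simp add: N_def mat_def vec_eq_iff)
    then show ?thesis by (simp add: f_def)
  qed
  have f1: "f 1 = cf Sg F"
  proof -
    have "N 1 = (\<chi> i. if i \<in> F then axis i 1 else Sg$i)"
      by (simp add: N_def vec_eq_iff axis_def)
    then show ?thesis by (simp add: f_def cf_def)
  qed
  have fnz: "f s \<noteq> 0" if "0 \<le> s" "s < 1" for s
  proof -
    let ?M = "(\<chi> i j. (1 - s) * (if i = j then 1 else 0) + s * Sg$i$j) :: real^'n^'n"
    have eqM: "?M = (1 - s) *\<^sub>R mat 1 + s *\<^sub>R Sg" by (simp add: vec_eq_iff mat_def)
    have Mx: "x \<bullet> (?M *v x) = (1 - s) * (x \<bullet> x) + s * (x \<bullet> (Sg *v x))" for x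
      unfolding eqM by (simp add: matrix_vector_mult_add_rdistrib inner_add_right flip: scaleR_matrix_vector_assoc)
    have "0 < x \<bullet> (?M *v x)" if "x \<noteq> 0" for x
    proof -
      have "0 < x \<bullet> x" using that by simp
      moreover have "0 \<le> s * (x \<bullet> (Sg *v x))" using psd \<open>0 \<le> s\<close> by simp
      ultimately show ?thesis unfolding Mx using \<open>s < 1\<close>
        by (smt (verit) mult_pos_pos)
    qed
    from pd_minor_nz[of ?M F, OF this]
    show ?thesis unfolding f_def N_def by (simp cong: if_cong)
  qed
  obtain t where t: "0 \<le> t" "t \<le> 1" "f t = 0"
    using IVT2'[of f 1 0 0, OF _ _ _ cont] f0 f1 neg by force
  show False
  proof (cases "t = 1")
    case True then show False using t f1 neg by simp
  next
    case False then show False using t fnz by simp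
  qed
qed

definition Phi :: "real \<Rightarrow> real^'n^'n \<Rightarrow> real^'n \<Rightarrow> real" where
  "Phi s2 Sg w = (\<Sum>F\<in>UNIV. tm s2 Sg w F)"

definition Pj :: "real \<Rightarrow> real^'n^'n \<Rightarrow> real^'n \<Rightarrow> 'n \<Rightarrow> real" where
  "Pj s2 Sg w j = (\<Sum>F | j \<in> F. tm s2 Sg w F)"

lemma cf_UNIV: fixes Sg :: "real^'n^'n" shows "cf Sg UNIV = 1"
proof -
  have "(\<chi> i. if i \<in> (UNIV :: 'n set) then axis i 1 else Sg$i) = (mat 1 :: real^'n^'n)"
    by (simp add: vec_eq_iff axis_def mat_def)
  then show ?thesis by (simp add: cf_def)
qed

lemma tm_nonneg:
  assumes "s2 > 0" "\<forall>i. w$i > 0" "\<forall>x. 0 \<le> x \<bullet> (Sg *v x)"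
  shows "0 \<le> tm s2 Sg w F"
  unfolding tm_def using assms cf_nonneg[of Sg F]
  by (intro mult_nonneg_nonneg prod_nonneg) (auto intro!: divide_nonneg_nonneg simp: less_imp_le)

lemma Phi_pos:
  assumes "s2 > 0" "\<forall>i. w$i > 0" "\<forall>x. 0 \<le> x \<bullet> (Sg *v x)"
  shows "0 < Phi s2 Sg w"
proof -
  have "0 < tm s2 Sg w UNIV" unfolding tm_def cf_UNIV using assms
    by (simp add: prod_pos)
  also have "tm s2 Sg w UNIV \<le> Phi s2 Sg w"
    unfolding Phi_def using tm_nonneg[OF assms]
    by (intro member_le_sum) auto
  finally show ?thesis .
qed

lemma Pj_nonneg:
  assumes "s2 > 0" "\<forall>i. w$i > 0" "\<forall>x. 0 \<le> x \<bullet> (Sg *v x)"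
  shows "0 \<le> Pj s2 Sg w j"
  unfolding Pj_def using tm_nonneg[OF assms] by (intro sum_nonneg) auto

lemma Pj_if: fixes Sg :: "real^'n^'n" shows "Pj s2 Sg w j = (\<Sum>F\<in>UNIV. if j \<in> F then tm s2 Sg w F else 0)"
  unfolding Pj_def using sum.inter_filter[of "UNIV :: 'n set set" "tm s2 Sg w" "\<lambda>F. j \<in> F"] by simp

lemma tm_ratio:
  assumes "\<forall>i. w$i > 0" "\<forall>i. x$i > 0"
  shows "tm s2 Sg w F = tm s2 Sg x F * (\<Prod>i\<in>F. x$i / w$i)"
proof -
  have "(\<Prod>i\<in>F. s2 / w$i) = (\<Prod>i\<in>F. s2 / x$i * (x$i / w$i))"
  proof (rule prod.cong)
    fix i assume "i \<in> F"
    have "w$i > 0" "x$i > 0" using assms by auto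
    then show "s2 / w$i = s2 / x$i * (x$i / w$i)" by (simp add: field_simps)
  qed simp
  then show ?thesis unfolding tm_def prod.distrib by simp
qed

lemma sufficiency:
  fixes x w :: "real^'n"
  assumes s2: "s2 > 0" and psd: "\<forall>v. 0 \<le> v \<bullet> (Sg *v v)"
    and x: "\<forall>i. x$i > 0" and w: "\<forall>i. w$i > 0"
    and sw: "(\<Sum>i\<in>UNIV. w$i) = (\<Sum>i\<in>UNIV. x$i)"
    and lam: "\<forall>j. Pj s2 Sg x j = lam * x$j" and lam0: "0 \<le> lam"
  shows "Phi s2 Sg x \<le> Phi s2 Sg w"
proof -
  let ?t = "tm s2 Sg x"
  define a where "a F = (\<Prod>i\<in>F. x$i / w$i)" for F
  have apos: "0 < a F" for F unfolding a_def using x w by (intro prod_pos) (auto intro: divide_pos_pos)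
  have tnn: "0 \<le> ?t F" for F using tm_nonneg[OF s2 x psd] .
  define Px where "Px = Phi s2 Sg x"
  have Pxpos: "0 < Px" unfolding Px_def using Phi_pos[OF s2 x psd] .
  have Pw: "Phi s2 Sg w = (\<Sum>F\<in>UNIV. ?t F * a F)"
    unfolding Phi_def a_def using tm_ratio[OF w x] by simp
  define m where "m = Phi s2 Sg w / Px"
  have Pwpos: "0 < Phi s2 Sg w" using Phi_pos[OF s2 w psd] .
  then have mpos: "0 < m" unfolding m_def using Pxpos by simp
  have each: "?t F * ln (a F) \<le> ?t F * (a F / m - 1 + ln m)" for F
  proof -
    have "ln (a F / m) \<le> a F / m - 1" using apos[of F] mpos by (intro ln_le_minus_one) simp
    then have "ln (a F) \<le> a F / m - 1 + ln m" using apos[of F] mpos by (simp add: ln_div)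
    then show ?thesis using tnn[of F] by (rule mult_left_mono)
  qed
  have "(\<Sum>F\<in>UNIV. ?t F * ln (a F)) \<le> (\<Sum>F\<in>UNIV. ?t F * (a F / m - 1 + ln m))"
    using each by (intro sum_mono) auto
  also have "\<dots> = (\<Sum>F\<in>UNIV. ?t F * a F) / m - Px + Px * ln m"
    unfolding Px_def Phi_def by (simp add: algebra_simps sum.distrib sum_subtractf sum_distrib_left sum_divide_distrib sum_distrib_right)
  also have "(\<Sum>F\<in>UNIV. ?t F * a F) / m = Px" unfolding Pw[symmetric] m_def using Pxpos Pwpos by simp
  finally have ineq: "(\<Sum>F\<in>UNIV. ?t F * ln (a F)) \<le> Px * ln m" by simp
  have lnaF: "ln (a F) = (\<Sum>i\<in>UNIV. if i \<in> F then ln (x$i / w$i) else 0)" for F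
  proof -
    have "ln (a F) = (\<Sum>i\<in>F. ln (x$i / w$i))" unfolding a_def using x w
      by (intro ln_prod) (auto intro: divide_pos_pos simp: less_imp_neq[symmetric])
    then show ?thesis using sum.inter_filter[of "UNIV :: 'n set" "\<lambda>i. ln (x$i / w$i)" "\<lambda>i. i \<in> F"] by simp
  qed
  have "(\<Sum>F\<in>UNIV. ?t F * ln (a F)) = (\<Sum>F\<in>UNIV. \<Sum>i\<in>UNIV. if i \<in> F then ?t F * ln (x$i / w$i) else 0)"
    unfolding lnaF sum_distrib_left by (simp add: if_distrib cong: if_cong)
  also have "\<dots> = (\<Sum>i\<in>UNIV. \<Sum>F\<in>UNIV. if i \<in> F then ?t F * ln (x$i / w$i) else 0)"
    by (rule sum.swap)
  also have "\<dots> = (\<Sum>i\<in>UNIV. Pj s2 Sg x i * ln (x$i / w$i))"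
    unfolding Pj_if sum_distrib_right by (intro sum.cong) auto
  also have "\<dots> = lam * (\<Sum>i\<in>UNIV. x$i * ln (x$i / w$i))"
    unfolding sum_distrib_left using lam by (simp add: algebra_simps)
  finally have lhs: "(\<Sum>F\<in>UNIV. ?t F * ln (a F)) = lam * (\<Sum>i\<in>UNIV. x$i * ln (x$i / w$i))" .
  have "(\<Sum>i\<in>UNIV. x$i - w$i) \<le> (\<Sum>i\<in>UNIV. x$i * ln (x$i / w$i))"
  proof (rule sum_mono)
    fix i
    have xi: "0 < x$i" and wi: "0 < w$i" using x w by auto
    have "ln (w$i / x$i) \<le> w$i / x$i - 1" using xi wi by (intro ln_le_minus_one) simp
    then have "x$i * ln (w$i / x$i) \<le> x$i * (w$i / x$i - 1)" using xi by (intro mult_left_mono) auto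
    moreover have "ln (x$i / w$i) = - ln (w$i / x$i)" using xi wi by (simp add: ln_div)
    moreover have "x$i * (w$i / x$i - 1) = w$i - x$i" using xi by (simp add: field_simps)
    ultimately show "x$i - w$i \<le> x$i * ln (x$i / w$i)" by simp
  qed
  moreover have "(\<Sum>i\<in>UNIV. x$i - w$i) = 0" using sw by (simp add: sum_subtractf)
  ultimately have "0 \<le> lam * (\<Sum>i\<in>UNIV. x$i * ln (x$i / w$i))" using lam0 by simp
  then have "0 \<le> Px * ln m" using ineq lhs by simp
  then have "0 \<le> ln m" using Pxpos by (simp add: zero_le_mult_iff)
  then have "1 \<le> m" using mpos by simp
  then show ?thesis unfolding m_def using Pxpos unfolding Px_def by (simp add: le_divide_eq)
qed

lemma necessity_pair:
  fixes x :: "real^'n" and Sg :: "real^'n^'n"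
  assumes s2: "s2 > 0" and psd: "\<forall>v. 0 \<le> v \<bullet> (Sg *v v)"
    and x: "\<forall>i. x$i > 0" and jk: "j \<noteq> k"
    and opt: "\<forall>w. (\<forall>i. w$i > 0) \<and> (\<Sum>i\<in>UNIV. w$i) = (\<Sum>i\<in>UNIV. x$i) \<longrightarrow> Phi s2 Sg x \<le> Phi s2 Sg w"
  shows "Pj s2 Sg x j / x$j \<le> Pj s2 Sg x k / x$k"
proof (rule ccontr)
  assume "\<not> ?thesis"
  then have lt: "Pj s2 Sg x k / x$k < Pj s2 Sg x j / x$j" by simp
  have xj: "0 < x$j" and xk: "0 < x$k" using x by auto
  define w where "w t = (\<chi> i. x$i + (if i = j then t else if i = k then -t else 0))" for t
  define ind where "ind F i = (if i \<in> F then 1 else 0 :: real)" for F and i :: 'n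
  define g where "g F t = - ind F j / (x$j + t) * (1 + ind F k * t / (x$k - t)) + ind F k / (x$k - t)" for F t
  define G where "G t = (\<Sum>F\<in>UNIV. tm s2 Sg x F * g F t)" for t
  have wj: "w t $ j = x$j + t" and wk: "w t $ k = x$k - t" for t using jk by (auto simp: w_def)
  have wo: "i \<noteq> j \<Longrightarrow> i \<noteq> k \<Longrightarrow> w t $ i = x$i" for i t by (simp add: w_def)
  have A: "Phi s2 Sg (w t) = Phi s2 Sg x + t * G t" if t0: "0 < t" and t1: "t < x$k" for t
  proof -
    have wpos: "\<forall>i. 0 < w t $ i"
    proof
      fix i show "0 < w t $ i"
        using x t0 t1 by (cases "i = j"; cases "i = k") (auto simp: wj wk wo add_pos_pos)
    qed
    have aF: "(\<Prod>i\<in>F. x$i / w t $ i) = 1 + t * g F t" for F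
    proof -
      have "(\<Prod>i\<in>F. x$i / w t $ i) = (\<Prod>i\<in>F \<inter> {j,k}. x$i / w t $ i)"
      proof (rule prod.mono_neutral_right)
        show "\<forall>i\<in>F - F \<inter> {j, k}. x$i / w t $ i = 1"
        proof
          fix i assume "i \<in> F - F \<inter> {j, k}"
          then have "i \<noteq> j" "i \<noteq> k" by auto
          moreover have "x$i \<noteq> 0" using x by (metis less_irrefl)
          ultimately show "x$i / w t $ i = 1" by (simp add: wo)
        qed
      qed auto
      also have "\<dots> = 1 + t * g F t"
      proof -
        have n1: "x$j + t \<noteq> 0" and n2: "x$k - t \<noteq> 0" using xj t0 t1 by auto
        consider "j \<in> F" "k \<in> F" | "j \<in> F" "k \<notin> F" | "j \<notin> F" "k \<in> F" | "j \<notin> F" "k \<notin> F"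
          by blast
        then show ?thesis
        proof cases
          case 1
          then have "F \<inter> {j,k} = {j,k}" by auto
          then show ?thesis using 1 jk n1 n2
            by (simp add: g_def ind_def wj wk divide_simps; simp add: algebra_simps)
        next
          case 2
          then have "F \<inter> {j,k} = {j}" by auto
          then show ?thesis using 2 jk n1 n2
            by (simp add: g_def ind_def wj wk divide_simps; simp add: algebra_simps)
        next
          case 3
          then have "F \<inter> {j,k} = {k}" by auto
          then show ?thesis using 3 jk n1 n2
            by (simp add: g_def ind_def wj wk divide_simps; simp add: algebra_simps)
        next
          case 4
          then have "F \<inter> {j,k} = {}" by auto
          then show ?thesis using 4 by (simp add: g_def ind_def)
        qed
      qed
      finally show ?thesis .
    qed
    have "Phi s2 Sg (w t) = (\<Sum>F\<in>UNIV. tm s2 Sg x F * (1 + t * g F t))"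
      unfolding Phi_def using tm_ratio[OF wpos x] aF by simp
    also have "\<dots> = Phi s2 Sg x + t * G t"
      unfolding Phi_def G_def by (simp add: algebra_simps sum.distrib sum_distrib_left)
    finally show ?thesis .
  qed
  have Psum: "(\<Sum>F\<in>UNIV. tm s2 Sg x F * ind F i) = Pj s2 Sg x i" for i
    unfolding Pj_if ind_def by (intro sum.cong) auto
  have G0: "G 0 = - Pj s2 Sg x j / x$j + Pj s2 Sg x k / x$k"
  proof -
    have "G 0 = (\<Sum>F\<in>UNIV. - (tm s2 Sg x F * ind F j) / x$j + tm s2 Sg x F * ind F k / x$k)"
      unfolding G_def g_def by (intro sum.cong) (auto simp: algebra_simps)
    also have "\<dots> = - (\<Sum>F\<in>UNIV. tm s2 Sg x F * ind F j) / x$j + (\<Sum>F\<in>UNIV. tm s2 Sg x F * ind F k) / x$k"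
      by (simp add: sum.distrib sum_divide_distrib sum_negf sum_subtractf)
    finally show ?thesis by (simp add: Psum)
  qed
  have "G \<midarrow>0\<rightarrow> G 0"
    unfolding G_def g_def using xj xk by (intro tendsto_intros) auto
  moreover have "G 0 < 0" using G0 lt by simp
  ultimately obtain r where r: "0 < r" "\<forall>t. t \<noteq> 0 \<and> \<bar>0 - t\<bar> < r \<longrightarrow> G t < 0"
    using LIM_fun_less_zero by blast
  define t where "t = min (r/2) (x$k/2)"
  have t0: "0 < t" and t1: "t < x$k" and tr: "t < r" using r xk by (auto simp: t_def)
  have Gt: "G t < 0" using r(2) t0 tr by auto
  have "Phi s2 Sg (w t) < Phi s2 Sg x" using A[OF t0 t1] Gt t0 by (simp add: mult_pos_neg)
  moreover have "\<forall>i. 0 < w t $ i"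
  proof
    fix i show "0 < w t $ i"
      using x t0 t1 by (cases "i = j"; cases "i = k") (auto simp: wj wk wo add_pos_pos)
  qed
  moreover have "(\<Sum>i\<in>UNIV. w t $ i) = (\<Sum>i\<in>UNIV. x$i)"
  proof -
    have pw: "w t $ i = x$i + ((if i = j then t else 0) + (if i = k then -t else 0))" for i
      using jk by (simp add: w_def)
    have "(\<Sum>i\<in>UNIV. w t $ i) = (\<Sum>i\<in>UNIV. x$i) + ((\<Sum>i\<in>UNIV. if i = j then t else 0) + (\<Sum>i\<in>UNIV. if i = k then -t else 0))"
      unfolding pw by (simp only: sum.distrib)
    also have "\<dots> = (\<Sum>i\<in>UNIV. x$i)" by simp
    finally show ?thesis .
  qed
  ultimately show False using opt by (meson not_le)
qed

lemma matrix_inv_eq: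
  fixes A B :: "real^'n^'n"
  assumes "A ** B = mat 1"
  shows "matrix_inv A = B" and "B ** A = mat 1"
proof -
  show BA: "B ** A = mat 1" using assms matrix_left_right_inverse by blast
  let ?P = "\<lambda>A'. A ** A' = mat 1 \<and> A' ** A = mat 1"
  have "?P (matrix_inv A)" unfolding matrix_inv_def by (rule someI[of ?P B]) (use assms BA in auto)
  then have "matrix_inv A = matrix_inv A ** (A ** B)" using assms by simp
  also have "\<dots> = (matrix_inv A ** A) ** B" by (simp add: matrix_mul_assoc)
  also have "\<dots> = B" using \<open>?P (matrix_inv A)\<close> by simp
  finally show "matrix_inv A = B" .
qed

lemma matrix_inv_right:
  fixes A :: "real^'n^'n"
  assumes "det A \<noteq> 0"
  shows "A ** matrix_inv A = mat 1" "matrix_inv A ** A = mat 1"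
proof -
  obtain B where "A ** B = mat 1" using assms unfolding invertible_det_nz[symmetric] invertible_def by blast
  then show "A ** matrix_inv A = mat 1" "matrix_inv A ** A = mat 1" using matrix_inv_eq by auto
qed

lemma diag_mult_left: "(diag_mat a ** M) $ i $ j = a$i * M$i$j"
proof -
  have "(diag_mat a ** M) $ i $ j = (\<Sum>k\<in>UNIV. (if i = k then a$i else 0) * M$k$j)"
    by (simp add: diag_mat_def matrix_matrix_mult_def)
  also have "\<dots> = (\<Sum>k\<in>UNIV. if i = k then a$i * M$k$j else 0)" by (rule sum.cong) auto
  also have "\<dots> = a$i * M$i$j" by (simp add: sum.delta)
  finally show ?thesis .
qed

lemma diag_mult_right: "(M ** diag_mat a) $ i $ j = M$i$j * a$j"
proof -
  have "(M ** diag_mat a) $ i $ j = (\<Sum>k\<in>UNIV. M$i$k * (if k = j then a$k else 0))"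
    by (simp add: diag_mat_def matrix_matrix_mult_def)
  also have "\<dots> = (\<Sum>k\<in>UNIV. if k = j then M$i$k * a$k else 0)" by (rule sum.cong) auto
  also have "\<dots> = M$i$j * a$j" by (simp add: sum.delta')
  finally show ?thesis .
qed

lemma diag_inv:
  fixes x :: "real^'n"
  assumes "\<forall>i. x$i \<noteq> 0"
  shows "matrix_inv (diag_mat x) = diag_mat (\<chi> i. 1 / x$i)"
proof (rule matrix_inv_eq(1))
  show "diag_mat x ** diag_mat (\<chi> i. 1 / x$i) = mat 1"
    using assms unfolding vec_eq_iff diag_mult_left by (simp add: mat_def diag_mat_def)
qed

lemma Bm_eq:
  fixes x :: "real^'n"
  shows "s2 *\<^sub>R diag_mat (\<chi> i. 1 / x$i) + Sg = Bm s2 Sg x"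
  by (simp add: vec_eq_iff diag_mat_def Bm_def)

lemma det_Bm_pos:
  assumes "s2 > 0" "\<forall>i. w$i > 0" "\<forall>x. 0 \<le> x \<bullet> (Sg *v x)"
  shows "0 < det (Bm s2 Sg w)"
  using Phi_pos[OF assms] unfolding Phi_def det_Bm .

lemma Mbeta_eq:
  fixes xi :: "real^'n"
  assumes s2: "s2 > 0" and xi: "\<forall>i. xi$i > 0" and psd: "\<forall>x. 0 \<le> x \<bullet> (Sg *v x)"
  shows "Mbeta s2 Sg A xi = transpose A ** matrix_inv (Bm s2 Sg xi) ** A"
proof -
  let ?S = "M0_sqrt xi"
  let ?Si = "diag_mat (\<chi> i. 1 / sqrt (xi$i))"
  let ?B = "Bm s2 Sg xi"
  let ?Bi = "matrix_inv ?B"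
  have dB: "det ?B \<noteq> 0" using det_Bm_pos[OF s2 xi psd] by simp
  have sq: "sqrt (xi$i) * sqrt (xi$i) = xi$i" "sqrt (xi$i) \<noteq> 0" for i using xi
    by (auto simp: less_imp_le dest: spec[of _ i])
  have SSi: "?S ** ?Si = mat 1" "?Si ** ?S = mat 1"
    using sq(2) unfolding vec_eq_iff diag_mult_left M0_sqrt_def by (simp_all add: mat_def diag_mat_def)
  have K: "s2 *\<^sub>R mat 1 + ?S ** Sg ** ?S = ?S ** ?B ** ?S"
  proof -
    have "(s2 *\<^sub>R mat 1 + ?S ** Sg ** ?S) $ i $ j = (?S ** ?B ** ?S) $ i $ j" for i j
    proof -
      have xi_ne: "xi$i \<noteq> 0" using xi by (metis less_irrefl)
      show ?thesis
        unfolding M0_sqrt_def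
        using sq[of i] xi_ne by (auto simp: diag_mult_left diag_mult_right Bm_def mat_def field_simps)
    qed
    then show ?thesis by (simp add: vec_eq_iff)
  qed
  have "(?S ** ?B ** ?S) ** (?Si ** ?Bi ** ?Si) = ?S ** ?B ** (?S ** ?Si) ** ?Bi ** ?Si"
    by (simp add: matrix_mul_assoc)
  also have "\<dots> = ?S ** (?B ** ?Bi) ** ?Si" using SSi by (simp add: matrix_mul_assoc)
  also have "\<dots> = mat 1" using matrix_inv_right(1)[OF dB] SSi by simp
  finally have "matrix_inv (s2 *\<^sub>R mat 1 + ?S ** Sg ** ?S) = ?Si ** ?Bi ** ?Si"
    unfolding K by (rule matrix_inv_eq(1))
  then have "Mbeta s2 Sg A xi = transpose A ** ?S ** (?Si ** ?Bi ** ?Si) ** ?S ** A"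
    unfolding Mbeta_def by simp
  also have "\<dots> = transpose A ** (?S ** ?Si) ** ?Bi ** (?Si ** ?S) ** A"
    by (simp add: matrix_mul_assoc)
  also have "\<dots> = transpose A ** ?Bi ** A" using SSi by simp
  finally show ?thesis .
qed

lemma det_Mbeta:
  fixes xi :: "real^'n"
  assumes s2: "s2 > 0" and xi: "\<forall>i. xi$i > 0" and psd: "\<forall>x. 0 \<le> x \<bullet> (Sg *v x)"
  shows "det (Mbeta s2 Sg A xi) = (det A)^2 / Phi s2 Sg xi"
proof -
  have dB: "det (Bm s2 Sg xi) \<noteq> 0" using det_Bm_pos[OF s2 xi psd] by simp
  have "det (Bm s2 Sg xi) * det (matrix_inv (Bm s2 Sg xi)) = 1"
    using matrix_inv_right(1)[OF dB] det_mul[of "Bm s2 Sg xi" "matrix_inv (Bm s2 Sg xi)"] by simp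
  then have "det (matrix_inv (Bm s2 Sg xi)) = 1 / Phi s2 Sg xi"
    using dB unfolding Phi_def det_Bm[symmetric] by (simp add: field_simps)
  then show ?thesis
    unfolding Mbeta_eq[OF assms] det_mul det_transpose by (simp add: power2_eq_square)
qed

lemma est_iff:
  fixes A :: "real^'n^'n" and xi :: "real^'n"
  assumes A: "invertible A" and nn: "\<forall>j. xi$j \<ge> 0"
  shows "estimable A xi \<longleftrightarrow> (\<forall>j. xi$j > 0)"
proof
  assume pos: "\<forall>j. xi$j > 0"
  have "rank A = CARD('n)" using inj_matrix_vector_mult[OF A] full_rank_injective by blast
  moreover have "span (columns (M0 xi)) = UNIV"
  proof -
    have "M0 xi ** diag_mat (\<chi> i. 1 / xi$i) = mat 1"
      using pos unfolding M0_def vec_eq_iff diag_mult_left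
      by (auto simp: mat_def diag_mat_def) (metis less_irrefl)
    then have "vec.span (columns (M0 xi)) = UNIV" using matrix_right_invertible_span_columns by blast
    then show ?thesis by (simp add: span_vec_eq)
  qed
  ultimately show "estimable A xi" unfolding estimable_def by simp
next
  assume est: "estimable A xi"
  show "\<forall>j. xi$j > 0"
  proof (rule ccontr)
    assume "\<not> (\<forall>j. xi$j > 0)"
    then obtain j where "xi$j = 0" using nn by (metis less_eq_real_def)
    define H where "H = {v :: real^'n. v$j = 0}"
    have subH: "subspace H" unfolding H_def subspace_def by simp
    have "columns (M0 xi) \<subseteq> H"
      using \<open>xi$j = 0\<close> by (auto simp: H_def columns_def column_def M0_def diag_mat_def)
    then have spH: "span (columns (M0 xi)) \<subseteq> H" using span_minimal subH by blast
    obtain A' where "A ** A' = mat 1" using A unfolding invertible_def by blast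
    then have "vec.span (columns A) = UNIV" using matrix_right_invertible_span_columns by blast
    then have "span (columns A) = UNIV" by (simp add: span_vec_eq)
    moreover have "span (columns A) \<subseteq> span (columns (M0 xi))"
      using est unfolding estimable_def by (meson span_minimal subspace_span)
    ultimately have "axis j 1 \<in> H" using spH by blast
    then show False by (simp add: H_def)
  qed
qed

lemma Ginv_diag:
  fixes x :: "real^'n" and Sg :: "real^'n^'n"
  assumes s2: "s2 > 0" and x: "\<forall>i. x$i > 0" and psd: "\<forall>v. 0 \<le> v \<bullet> (Sg *v v)"
    and sym: "transpose Sg = Sg"
  shows "matrix_inv (Bm s2 Sg x) $ j $ j = Pj s2 Sg x j * x$j / (s2 * Phi s2 Sg x)"
proof -
  let ?B = "Bm s2 Sg x"
  let ?G = "matrix_inv ?B"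
  have dBpos: "0 < det ?B" using det_Bm_pos[OF s2 x psd] .
  then have dB: "det ?B \<noteq> 0" by simp
  have "?B *v (?G *v axis j 1) = axis j 1"
    by (simp add: matrix_vector_mul_assoc matrix_inv_right(1)[OF dB])
  then have "?G *v axis j 1 = (\<chi> k. det (\<chi> i l. if l = k then axis j 1 $ i else ?B$i$l) / det ?B)"
    using cramer[OF dB] by blast
  then have "(?G *v axis j 1) $ j = det (\<chi> i l. if l = j then axis j 1 $ i else ?B$i$l) / det ?B"
    by simp
  moreover have "(?G *v axis j 1) $ j = ?G $ j $ j"
    by (metis cart_eq_inner_axis matrix_vector_mul_component)
  moreover have "det (\<chi> i l. if l = j then axis j 1 $ i else ?B$i$l) = det (\<chi> i. if i = j then axis j 1 else ?B$i)"
  proof -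
    have symB: "?B$i$l = ?B$l$i" for i l
    proof -
      have "Sg$i$l = Sg$l$i" using sym by (metis transpose_def vec_lambda_beta)
      then show ?thesis by (simp add: Bm_def)
    qed
    have "(\<chi> i l. if l = j then axis j 1 $ i else ?B$i$l) = transpose (\<chi> i. if i = j then axis j 1 else ?B$i)"
      by (simp add: vec_eq_iff transpose_def symB)
    then show ?thesis by simp
  qed
  moreover have "s2 / x$j * det (\<chi> i. if i = j then axis j 1 else ?B$i) = Pj s2 Sg x j"
    unfolding Pj_def using x by (intro cof_Bm) (metis less_irrefl)
  moreover have "det ?B = Phi s2 Sg x" unfolding Phi_def det_Bm ..
  moreover have "x$j > 0" using x by auto
  ultimately show ?thesis using s2 dBpos by (auto simp: field_simps)
qed

lemma rhs_iff:
  fixes x :: "real^'n" and Sg :: "real^'n^'n"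
  assumes s2: "s2 > 0" and x: "\<forall>i. x$i > 0" and psd: "\<forall>v. 0 \<le> v \<bullet> (Sg *v v)"
    and sym: "transpose Sg = Sg"
  shows "(\<forall>j. I * (matrix_inv (M0 x) ** matrix_inv (s2 *\<^sub>R matrix_inv (M0 x) + Sg)
                ** matrix_inv (M0 x)) $ j $ j
         = trace (matrix_inv (s2 *\<^sub>R matrix_inv (M0 x) + Sg) ** matrix_inv (M0 x)))
     \<longleftrightarrow> (\<forall>j. I * Pj s2 Sg x j / x$j = (\<Sum>i\<in>UNIV. Pj s2 Sg x i))"
proof -
  let ?Di = "diag_mat (\<chi> i. 1 / x$i)"
  let ?G = "matrix_inv (Bm s2 Sg x)"
  have Di: "matrix_inv (M0 x) = ?Di" unfolding M0_def using x by (intro diag_inv) (metis less_irrefl)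
  have PhiP: "0 < Phi s2 Sg x" using Phi_pos[OF s2 x psd] .
  have e1: "(?Di ** ?G ** ?Di) $ j $ j = Pj s2 Sg x j / x$j * (1 / (s2 * Phi s2 Sg x))" for j
  proof -
    have "x$j > 0" using x by auto
    then show ?thesis
      by (simp add: diag_mult_left diag_mult_right Ginv_diag[OF assms] field_simps power2_eq_square)
  qed
  have e2: "trace (?G ** ?Di) = (\<Sum>i\<in>UNIV. Pj s2 Sg x i) * (1 / (s2 * Phi s2 Sg x))"
  proof -
    have "trace (?G ** ?Di) = (\<Sum>i\<in>UNIV. Pj s2 Sg x i * (1 / (s2 * Phi s2 Sg x)))"
      unfolding trace_def
    proof (rule sum.cong)
      fix i
      have "x$i > 0" using x by auto
      then show "(?G ** ?Di) $ i $ i = Pj s2 Sg x i * (1 / (s2 * Phi s2 Sg x))"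
        by (simp add: diag_mult_right Ginv_diag[OF assms] field_simps)
    qed simp
    then show ?thesis by (simp add: sum_divide_distrib)
  qed
  have c: "0 < 1 / (s2 * Phi s2 Sg x)" using s2 PhiP by simp
  show ?thesis
    unfolding Di Bm_eq e1 e2
  proof (intro iff_allI)
    fix j
    let ?c = "1 / (s2 * Phi s2 Sg x)"
    have "I * (Pj s2 Sg x j / x$j * ?c) = (I * Pj s2 Sg x j / x$j) * ?c" by simp
    then show "(I * (Pj s2 Sg x j / x$j * ?c) = (\<Sum>i\<in>UNIV. Pj s2 Sg x i) * ?c) \<longleftrightarrow>
      (I * Pj s2 Sg x j / x$j = (\<Sum>i\<in>UNIV. Pj s2 Sg x i))"
      using c by (metis less_irrefl mult_cancel_right)
  qed
qed

lemma ln_det_le_iff: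
  fixes A :: "real^'n^'n"
  assumes s2: "s2 > 0" and psd: "\<forall>x. 0 \<le> x \<bullet> (Sg *v x)" and A: "invertible A"
    and xi: "\<forall>i. xi$i > 0" and xs: "\<forall>i. xs$i > 0"
  shows "ln (det (Mbeta s2 Sg A xi)) \<le> ln (det (Mbeta s2 Sg A xs)) \<longleftrightarrow> Phi s2 Sg xs \<le> Phi s2 Sg xi"
proof -
  have dA: "det A \<noteq> 0" using A invertible_det_nz by blast
  then have a: "0 < (det A)^2" by simp
  have p: "0 < Phi s2 Sg xi" "0 < Phi s2 Sg xs" using Phi_pos[OF s2 xi psd] Phi_pos[OF s2 xs psd] by auto
  have "ln (det (Mbeta s2 Sg A xi)) \<le> ln (det (Mbeta s2 Sg A xs)) \<longleftrightarrow>
      (det A)^2 / Phi s2 Sg xi \<le> (det A)^2 / Phi s2 Sg xs"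
    unfolding det_Mbeta[OF s2 xi psd] det_Mbeta[OF s2 xs psd] using a p by simp
  also have "\<dots> \<longleftrightarrow> (det A)^2 * Phi s2 Sg xs \<le> (det A)^2 * Phi s2 Sg xi"
    using p by (simp add: divide_le_eq le_divide_eq field_simps)
  also have "\<dots> \<longleftrightarrow> Phi s2 Sg xs \<le> Phi s2 Sg xi" using a by simp
  finally show ?thesis .
qed

theorem corollary2:
  fixes s2 I :: real and Sg A :: "real^'n^'n" and xs :: "real^'n"
  assumes "s2 > 0" and "I > 0"
    and "transpose Sg = Sg" and "\<forall>x. 0 \<le> x \<bullet> (Sg *v x)"
    and "invertible A"
    and "is_design I xs" and "\<forall>j. xs $ j > 0"
  shows "D_optimal I s2 Sg A xs \<longleftrightarrow>
    (\<forall>j. I * (matrix_inv (M0 xs) ** matrix_inv (s2 *\<^sub>R matrix_inv (M0 xs) + Sg)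
                ** matrix_inv (M0 xs)) $ j $ j
         = trace (matrix_inv (s2 *\<^sub>R matrix_inv (M0 xs) + Sg) ** matrix_inv (M0 xs)))"
proof -
  have s2: "s2 > 0" and Ip: "I > 0" and sym: "transpose Sg = Sg" and psd: "\<forall>x. 0 \<le> x \<bullet> (Sg *v x)"
    and A: "invertible A" and des: "is_design I xs" and x: "\<forall>j. xs $ j > 0" using assms by auto
  have sumx: "(\<Sum>i\<in>UNIV. xs$i) = I" using des unfolding is_design_def by simp
  have estx: "estimable A xs" using est_iff[OF A] x by (simp add: less_imp_le)
  let ?Opt = "\<forall>w. (\<forall>i. w$i > 0) \<and> (\<Sum>i\<in>UNIV. w$i) = (\<Sum>i\<in>UNIV. xs$i) \<longrightarrow> Phi s2 Sg xs \<le> Phi s2 Sg w"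
  have L: "D_optimal I s2 Sg A xs \<longleftrightarrow> ?Opt"
  proof -
    have "D_optimal I s2 Sg A xs \<longleftrightarrow>
      (\<forall>xi. is_design I xi \<and> estimable A xi \<longrightarrow>
        ln (det (Mbeta s2 Sg A xi)) \<le> ln (det (Mbeta s2 Sg A xs)))"
      unfolding D_optimal_def using des estx by simp
    also have "\<dots> \<longleftrightarrow> ?Opt"
    proof -
      have "(is_design I xi \<and> estimable A xi \<longrightarrow>
          ln (det (Mbeta s2 Sg A xi)) \<le> ln (det (Mbeta s2 Sg A xs))) \<longleftrightarrow>
        ((\<forall>i. xi$i > 0) \<and> (\<Sum>i\<in>UNIV. xi$i) = (\<Sum>i\<in>UNIV. xs$i) \<longrightarrow> Phi s2 Sg xs \<le> Phi s2 Sg xi)"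
        for xi
      proof -
        have "is_design I xi \<and> estimable A xi \<longleftrightarrow> (\<forall>i. xi$i > 0) \<and> (\<Sum>i\<in>UNIV. xi$i) = (\<Sum>i\<in>UNIV. xs$i)"
        proof
          assume h: "is_design I xi \<and> estimable A xi"
          then have "\<forall>j. xi$j \<ge> 0" unfolding is_design_def by simp
          then show "(\<forall>i. xi$i > 0) \<and> (\<Sum>i\<in>UNIV. xi$i) = (\<Sum>i\<in>UNIV. xs$i)"
            using h est_iff[OF A] sumx unfolding is_design_def by auto
        next
          assume h: "(\<forall>i. xi$i > 0) \<and> (\<Sum>i\<in>UNIV. xi$i) = (\<Sum>i\<in>UNIV. xs$i)"
          then show "is_design I xi \<and> estimable A xi"
            using est_iff[OF A] sumx unfolding is_design_def by (auto simp: less_imp_le)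
        qed
        then show ?thesis using ln_det_le_iff[OF s2 psd A _ x] by auto
      qed
      then show ?thesis by blast
    qed
    finally show ?thesis .
  qed
  have R: "(\<forall>j. I * (matrix_inv (M0 xs) ** matrix_inv (s2 *\<^sub>R matrix_inv (M0 xs) + Sg)
                ** matrix_inv (M0 xs)) $ j $ j
         = trace (matrix_inv (s2 *\<^sub>R matrix_inv (M0 xs) + Sg) ** matrix_inv (M0 xs)))
     \<longleftrightarrow> (\<forall>j. I * Pj s2 Sg xs j / xs$j = (\<Sum>i\<in>UNIV. Pj s2 Sg xs i))"
    by (rule rhs_iff[OF s2 x psd sym])
  have C: "?Opt \<longleftrightarrow> (\<forall>j. I * Pj s2 Sg xs j / xs$j = (\<Sum>i\<in>UNIV. Pj s2 Sg xs i))"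
  proof
    assume opt: ?Opt
    have le: "Pj s2 Sg xs j / xs$j \<le> Pj s2 Sg xs k / xs$k" for j k
    proof (cases "j = k")
      case True then show ?thesis by simp
    next
      case False then show ?thesis using necessity_pair[OF s2 psd x False opt] by simp
    qed
    show "\<forall>j. I * Pj s2 Sg xs j / xs$j = (\<Sum>i\<in>UNIV. Pj s2 Sg xs i)"
    proof
      fix j
      have eq: "Pj s2 Sg xs i = xs$i * (Pj s2 Sg xs j / xs$j)" for i
      proof -
        have "Pj s2 Sg xs i / xs$i = Pj s2 Sg xs j / xs$j" using le[of i j] le[of j i] by simp
        moreover have "xs$i > 0" using x by auto
        ultimately show ?thesis by (simp add: field_simps)
      qed
      have "(\<Sum>i\<in>UNIV. Pj s2 Sg xs i) = (\<Sum>i\<in>UNIV. xs$i) * (Pj s2 Sg xs j / xs$j)"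
      proof -
        have "(\<Sum>i\<in>UNIV. Pj s2 Sg xs i) = (\<Sum>i\<in>UNIV. xs$i * (Pj s2 Sg xs j / xs$j))"
          by (intro sum.cong refl) (rule eq)
        then show ?thesis by (simp only: sum_distrib_right)
      qed
      then show "I * Pj s2 Sg xs j / xs$j = (\<Sum>i\<in>UNIV. Pj s2 Sg xs i)" using sumx by simp
    qed
  next
    assume h: "\<forall>j. I * Pj s2 Sg xs j / xs$j = (\<Sum>i\<in>UNIV. Pj s2 Sg xs i)"
    define lam where "lam = (\<Sum>i\<in>UNIV. Pj s2 Sg xs i) / I"
    have lam0: "0 \<le> lam" unfolding lam_def using Pj_nonneg[OF s2 x psd] Ip
      by (intro divide_nonneg_nonneg sum_nonneg) (auto simp: less_imp_le)
    have lam: "\<forall>j. Pj s2 Sg xs j = lam * xs$j"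
    proof
      fix j
      have "xs$j > 0" using x by auto
      then show "Pj s2 Sg xs j = lam * xs$j" using h[rule_format, of j] Ip unfolding lam_def
        by (simp add: field_simps)
    qed
    show ?Opt
    proof (intro allI impI)
      fix w :: "real^'n" assume "(\<forall>i. w$i > 0) \<and> (\<Sum>i\<in>UNIV. w$i) = (\<Sum>i\<in>UNIV. xs$i)"
      then show "Phi s2 Sg xs \<le> Phi s2 Sg w"
        using sufficiency[OF s2 psd x _ _ lam lam0] by blast
    qed
  qed
  show ?thesis using L R C by simp
qed

end
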